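(* Let $A=[a_{ij}]\in\{0,1\}^{N\times N}$ be the adjacency matrix of a static contact graph (with $a_{ii}=0$), let $\kappa>0$, $\beta_a\ge 0$, and let $H=(h_1,\dots,h_N):\mathbb{R}^N\to\mathbb{R}^N$ be the center manifold map of the SAIS system in the coordinates $(\mathbf p,\mathbf r)$ described in the context (in particular each component $h_j$ is nonnegative). Then the trajectories of the reduced system \[ \dot{\hat r}_i=-\kappa\Big(1+\frac{\beta_a}{\kappa}\Big)\hat r_i\sum_{j=1}^N a_{ij}h_j(\hat{\mathbf r}),\qquad i\in\{1,\dots,N\}, \] converge asymptotically to the set \[ \Omega=\Big\{\hat{\mathbf r}\in\mathbb{R}^N:\ \hat r_i\sum_{j=1}^N a_{ij}h_j(\hat{\mathbf r})=0\ \text{for all } i\Big\}. \]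
   Context: Setting: the SAIS system $\dot p_i=\beta_0(1-p_i-q_i)\sum_j a_{ij}p_j+\beta_a q_i\sum_j a_{ij}p_j-\delta p_i$, $\dot q_i=\kappa(1-p_i-q_i)\sum_j a_{ij}p_j-\beta_a q_i\sum_j a_{ij}p_j$, with $\beta_0>0$, $\delta>0$, $\kappa>0$, $0\le\beta_a<\beta_0$, where $p_i,q_i$ are infection/alert probabilities and $a_{ij}=1$ iff $j$ is a neighbor of $i$. Define $r_i=q_i-\frac{1-p_i}{1+\beta_a/\kappa}$, $\mathbf p=(p_1,\dots,p_N)^T$, $\mathbf r=(r_1,\dots,r_N)^T$ and $\beta_{eq}=\beta_0\frac{\beta_a/\kappa}{1+\beta_a/\kappa}+\beta_a\frac{1}{1+\beta_a/\kappa}$. In these coordinates the system reads $\dot{\mathbf p}=(\beta_{eq}A-\delta I)\mathbf p+G_1(\mathbf p,\mathbf r)$, $\dot{\mathbf r}=G_2(\mathbf p,\mathbf r)$, where $G_1,G_2$ have components $g_{1,i}=-\{\beta_0+\frac{\beta_0+\beta_a}{1+\beta_a/\kappa}\}p_i\sum_j a_{ij}p_j-(\beta_0-\beta_a)r_i\sum_j a_{ij}p_j$ and $g_{2,i}=-\kappa(1+\frac{\beta_a}{\kappa})r_i\sum_j a_{ij}p_j$. When $\beta_{eq}A-\delta I$ is Hurwitz, center manifold theory gives a map $H$ with $H(\mathbf 0)=\mathbf 0$, $\nabla H(\mathbf 0)=\mathbf 0$ such that $\mathbf p=H(\mathbf r)$ is an invariant (center) manifold near the origin; since $p_i$ are probabilities,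 each $h_i$ is nonnegative. *)

theory Defs
  imports "HOL-Analysis.Analysis"
begin

text \<open>SAIS model on N nodes; nodes are indexed by a finite type 'n (N = CARD('n)),
  vectors in R^N are elements of real^'n.  The adjacency matrix is a :: 'n => 'n => real.\<close>

definition adjacency :: "('n::finite \<Rightarrow> 'n \<Rightarrow> real) \<Rightarrow> bool" where
  "adjacency a \<longleftrightarrow> (\<forall>i j. a i j = 0 \<or> a i j = 1) \<and> (\<forall>i. a i i = 0) \<and> (\<forall>i j. a i j = a j i)"

definition beta_eq :: "real \<Rightarrow> real \<Rightarrow> real \<Rightarrow> real" where
  "beta_eq b0 ba k = b0 * ((ba / k) / (1 + ba / k)) + ba * (1 / (1 + ba / k))"

definition lin_part :: "real \<Rightarrow> real \<Rightarrow> real \<Rightarrow> real \<Rightarrow> ('n::finite \<Rightarrow> 'n \<Rightarrow> real)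
    \<Rightarrow> real^'n \<Rightarrow> real^'n" where
  "lin_part b0 ba k d a p = (\<chi> i. beta_eq b0 ba k * (\<Sum>j\<in>UNIV. a i j * p$j) - d * p$i)"

definition G1 :: "real \<Rightarrow> real \<Rightarrow> real \<Rightarrow> ('n::finite \<Rightarrow> 'n \<Rightarrow> real)
    \<Rightarrow> real^'n \<Rightarrow> real^'n \<Rightarrow> real^'n" where
  "G1 b0 ba k a p r = (\<chi> i. - (b0 + (b0 + ba) / (1 + ba / k)) * p$i * (\<Sum>j\<in>UNIV. a i j * p$j)
                          - (b0 - ba) * r$i * (\<Sum>j\<in>UNIV. a i j * p$j))"

definition G2 :: "real \<Rightarrow> real \<Rightarrow> ('n::finite \<Rightarrow> 'n \<Rightarrow> real)
    \<Rightarrow> real^'n \<Rightarrow> real^'n \<Rightarrow> real^'n" where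
  "G2 ba k a p r = (\<chi> i. - k * (1 + ba / k) * r$i * (\<Sum>j\<in>UNIV. a i j * p$j))"

text \<open>H is a center manifold map of the SAIS system in (p,r) coordinates:
  H differentiable, H(0)=0, DH(0)=0, the graph p = H(r) is invariant near the origin
  (invariance equation DH(r)[G2(H r, r)] = (beta_eq A - delta I) H r + G1(H r, r)),
  and each component of H is nonnegative.\<close>
definition center_manifold_map :: "real \<Rightarrow> real \<Rightarrow> real \<Rightarrow> real \<Rightarrow> ('n::finite \<Rightarrow> 'n \<Rightarrow> real)
    \<Rightarrow> (real^'n \<Rightarrow> real^'n) \<Rightarrow> bool" where
  "center_manifold_map b0 ba k d a H \<longleftrightarrow>
     (\<exists>H'. (\<forall>x. (H has_derivative H' x) (at x))
        \<and> H 0 = 0 \<and> H' 0 = (\<lambda>_. 0)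
        \<and> (\<exists>e>0. \<forall>r\<in>ball 0 e. H' r (G2 ba k a (H r) r) = lin_part b0 ba k d a (H r) + G1 b0 ba k a (H r) r))
     \<and> (\<forall>r j. H r $ j \<ge> 0)"

definition reduced_field :: "real \<Rightarrow> real \<Rightarrow> ('n::finite \<Rightarrow> 'n \<Rightarrow> real)
    \<Rightarrow> (real^'n \<Rightarrow> real^'n) \<Rightarrow> real^'n \<Rightarrow> real^'n" where
  "reduced_field ba k a H r = (\<chi> i. - k * (1 + ba / k) * r$i * (\<Sum>j\<in>UNIV. a i j * H r $ j))"

definition Omega_set :: "('n::finite \<Rightarrow> 'n \<Rightarrow> real) \<Rightarrow> (real^'n \<Rightarrow> real^'n) \<Rightarrow> (real^'n) set" where
  "Omega_set a H = {r. \<forall>i. r$i * (\<Sum>j\<in>UNIV. a i j * H r $ j) = 0}"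

end

theory Submission
  imports Defs
begin

theorem lemma1:
  fixes a :: "'n::finite \<Rightarrow> 'n \<Rightarrow> real"
    and b0 ba k d :: real
    and H :: "real^'n \<Rightarrow> real^'n"
    and r :: "real \<Rightarrow> real^'n"
  assumes "adjacency a"
    and "b0 > 0" and "d > 0" and "k > 0" and "0 \<le> ba" and "ba < b0"
    and "center_manifold_map b0 ba k d a H"
    and "\<And>t. t \<ge> 0 \<Longrightarrow> (r has_vector_derivative reduced_field ba k a H (r t)) (at t within {0..})"
  shows "((\<lambda>t. infdist (r t) (Omega_set a H)) \<longlongrightarrow> 0) at_top"
proof -
  obtain H' where Hd: "\<And>x. (H has_derivative H' x) (at x)" and Hnn: "\<And>x j. H x $ j \<ge> 0"
    using assms(7) unfolding center_manifold_map_def by blast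
  have contH: "continuous_on UNIV H"
    using Hd has_derivative_continuous continuous_at_imp_continuous_on by blast
  have ann: "\<And>i j. a i j \<ge> 0" using assms(1) unfolding adjacency_def
    by (metis order_refl zero_le_one)
  define c where "c = k * (1 + ba / k)"
  have cpos: "c > 0" using assms(4,5) by (simp add: c_def distrib_left)
  define s where "s x i = (\<Sum>j\<in>UNIV. a i j * H x $ j)" for x i
  have snn: "\<And>x i. s x i \<ge> 0" unfolding s_def by (intro sum_nonneg mult_nonneg_nonneg ann Hnn)
  define F where "F = reduced_field ba k a H"
  have Fi: "\<And>x i. F x $ i = - c * x$i * s x i" by (simp add: F_def reduced_field_def c_def s_def)
  define g where "g x = (\<Sum>i\<in>UNIV. (x$i)^2 * s x i)" for x
  have gnn: "g x \<ge> 0" for x unfolding g_def by (intro sum_nonneg mult_nonneg_nonneg snn) auto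
  have inner: "x \<bullet> F x = - c * g x" for x
    unfolding inner_vec_def g_def Fi sum_distrib_left
    by (intro sum.cong) (auto simp: power2_eq_square)
  have conts: "continuous_on UNIV (\<lambda>x. s x i)" for i
    unfolding s_def
    by (intro continuous_intros continuous_on_component[OF contH])
  have Feq: "F = (\<lambda>x. \<chi> i. - c * x$i * s x i)" by (auto simp: vec_eq_iff Fi)
  have contF: "continuous_on UNIV F"
    unfolding Feq by (intro continuous_on_vec_lambda continuous_intros conts)
  have contg: "continuous_on UNIV g"
    unfolding g_def by (intro continuous_intros conts)
  define V where "V t = r t \<bullet> r t" for t
  have rder: "(r has_vector_derivative F (r t)) (at t within {0..})" if "t \<ge> 0" for t
    using assms(8)[OF that] by (simp add: F_def)
  have rcont: "continuous_on {0..} r"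
    using rder continuous_on_eq_continuous_within has_vector_derivative_continuous by fastforce
  have key: "V \<beta> + 2 * c * m * (\<beta> - \<alpha>) \<le> V \<alpha>"
    if "0 \<le> \<alpha>" "\<alpha> \<le> \<beta>" "\<And>\<tau>. \<tau> \<in> {\<alpha>..\<beta>} \<Longrightarrow> g (r \<tau>) \<ge> m" for \<alpha> \<beta> m
  proof (cases "\<alpha> = \<beta>")
    case True then show ?thesis by simp
  next
    case False
    then have lt: "\<alpha> < \<beta>" using that by simp
    define W where "W \<tau> = V \<tau> + 2 * c * m * \<tau>" for \<tau>
    have "\<exists>x\<in>{\<alpha><..<\<beta>}. W \<beta> - W \<alpha> =
      (\<lambda>h. r x \<bullet> (h *\<^sub>R F (r x)) + (h *\<^sub>R F (r x)) \<bullet> r x + 2 * c * m * h) (\<beta> - \<alpha>)"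
    proof (rule mvt_simple[OF lt])
      fix x assume x: "\<alpha> \<le> x" "x \<le> \<beta>"
      have d: "(r has_derivative (\<lambda>h. h *\<^sub>R F (r x))) (at x within {\<alpha>..\<beta>})"
        using has_vector_derivative_within_subset[OF rder[of x], of "{\<alpha>..\<beta>}"] x that
        by (auto simp: has_vector_derivative_def)
      show "(W has_derivative (\<lambda>h. r x \<bullet> (h *\<^sub>R F (r x)) + (h *\<^sub>R F (r x)) \<bullet> r x + 2 * c * m * h))
          (at x within {\<alpha>..\<beta>})"
        unfolding W_def V_def
      proof (rule has_derivative_add[OF has_derivative_inner[OF d d]])
        show "((\<lambda>\<tau>. 2 * c * m * \<tau>) has_derivative (\<lambda>h. 2 * c * m * h)) (at x within {\<alpha>..\<beta>})"
          by (intro derivative_eq_intros) auto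
      qed
    qed
    then obtain x where x: "x \<in> {\<alpha><..<\<beta>}" and eq: "W \<beta> - W \<alpha> =
       (\<beta> - \<alpha>) * (2 * (r x \<bullet> F (r x)) + 2 * c * m)"
      by (auto simp: algebra_simps inner_commute)
    have "g (r x) \<ge> m" using x that by auto
    then have "2 * (r x \<bullet> F (r x)) + 2 * c * m \<le> 0"
      using inner[of "r x"] cpos by (simp add: algebra_simps mult_left_mono)
    then have "W \<beta> - W \<alpha> \<le> 0" using eq lt by (simp add: mult_nonneg_nonpos)
    then show ?thesis by (simp add: W_def algebra_simps)
  qed
  have Vmono: "V \<beta> \<le> V \<alpha>" if "0 \<le> \<alpha>" "\<alpha> \<le> \<beta>" for \<alpha> \<beta>
    using key[OF that, of 0] gnn by simp
  define R where "R = norm (r 0)"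
  have inK: "r t \<in> cball 0 R" if "t \<ge> 0" for t
  proof -
    have "(norm (r t))^2 \<le> (norm (r 0))^2"
      using Vmono[OF order_refl that] by (simp add: V_def power2_norm_eq_inner)
    then show ?thesis by (simp add: R_def power2_le_iff_abs_le)
  qed
  have "compact (F ` cball 0 R)"
    by (intro compact_continuous_image continuous_on_subset[OF contF]) auto
  then obtain B where Bpos: "B > 0" and Bb: "\<And>x. x \<in> cball 0 R \<Longrightarrow> norm (F x) \<le> B"
    using compact_imp_bounded bounded_pos by (metis image_eqI)
  have lip: "norm (r \<tau> - r t) \<le> B * (\<tau> - t)" if "0 \<le> t" "t \<le> \<tau>" for t \<tau>
  proof -
    have "norm (r \<tau> - r t) \<le> B * norm (\<tau> - t)"
    proof (rule differentiable_bound[where S="{t..\<tau>}" and f'="\<lambda>x h. h *\<^sub>R F (r x)"])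
      fix x assume x: "x \<in> {t..\<tau>}"
      show "(r has_derivative (\<lambda>h. h *\<^sub>R F (r x))) (at x within {t..\<tau>})"
        using has_vector_derivative_within_subset[OF rder[of x], of "{t..\<tau>}"] x that
        by (auto simp: has_vector_derivative_def)
      have "onorm (\<lambda>h. h *\<^sub>R F (r x)) = onorm (\<lambda>h::real. h) * norm (F (r x))"
        by (rule onorm_scaleR_left) (rule bounded_linear_ident)
      also have "\<dots> \<le> B" using Bb[OF inK] x that
        by (simp add: onorm_id[unfolded id_def])
      finally show "onorm (\<lambda>h. h *\<^sub>R F (r x)) \<le> B" .
    qed (use that in auto)
    then show ?thesis using that by simp
  qed
  define \<Omega> where "\<Omega> = Omega_set a H"
  have gzero: "x \<in> \<Omega>" if "g x = 0" for x
  proof -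
    have "\<forall>i\<in>UNIV. (x$i)^2 * s x i = 0"
      using that unfolding g_def
      by (subst sum_nonneg_eq_0_iff[symmetric]) (auto intro!: mult_nonneg_nonneg snn)
    then show ?thesis by (auto simp: \<Omega>_def Omega_set_def s_def[symmetric])
  qed
  show ?thesis unfolding \<Omega>_def[symmetric]
  proof (rule tendstoI)
    fix e :: real assume epos: "e > 0"
    show "\<forall>\<^sub>F t in at_top. dist (infdist (r t) \<Omega>) 0 < e"
    proof (rule ccontr)
      assume "\<not> ?thesis"
      then have bad: "\<exists>t\<ge>T. infdist (r t) \<Omega> \<ge> e" for T
        by (auto simp: eventually_at_top_linorder infdist_nonneg not_less)
      define K where "K = cball 0 R \<inter> {x. e/2 \<le> infdist x \<Omega>}"
      have "closed {x. e/2 \<le> infdist x \<Omega>}"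
        by (intro closed_Collect_le continuous_intros)
      then have cK: "compact K" unfolding K_def by (intro compact_Int_closed) auto
      obtain t0 where t0: "t0 \<ge> 0" "infdist (r t0) \<Omega> \<ge> e" using bad by blast
      have "r t0 \<in> K" using t0 inK epos by (auto simp: K_def)
      then have "K \<noteq> {}" by auto
      then obtain x0 where x0: "x0 \<in> K" and x0min: "\<And>y. y \<in> K \<Longrightarrow> g x0 \<le> g y"
        using continuous_attains_inf[OF cK _ continuous_on_subset[OF contg]] by blast
      have "g x0 \<noteq> 0"
      proof
        assume "g x0 = 0"
        then have "x0 \<in> \<Omega>" by (rule gzero)
        then have "infdist x0 \<Omega> = 0" by simp
        then show False using x0 epos by (auto simp: K_def)
      qed
      then have mpos: "g x0 > 0" using gnn[of x0] by simp
      define m where "m = g x0"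
      define h where "h = e / (2 * B)"
      have hpos: "h > 0" using epos Bpos by (simp add: h_def)
      define \<delta> where "\<delta> = 2 * c * m * h"
      have dpos: "\<delta> > 0" using cpos mpos hpos by (simp add: \<delta>_def m_def)
      define L where "L = Inf (V ` {0..})"
      have bdd: "bdd_below (V ` {0..})"
        by (rule bdd_belowI[of _ 0]) (auto simp: V_def)
      have Lle: "L \<le> V t" if "t \<ge> 0" for t
        unfolding L_def using bdd that by (auto intro: cInf_lower)
      have "\<exists>y\<in>V ` {0..}. y < L + \<delta>"
        unfolding L_def by (rule cInf_lessD) (use dpos in auto)
      then obtain T where T: "T \<ge> 0" "V T < L + \<delta>" by auto
      obtain t where t: "t \<ge> T" "infdist (r t) \<Omega> \<ge> e" using bad by blast
      have "\<tau> \<in> {t..t+h} \<Longrightarrow> g (r \<tau>) \<ge> m" for \<tau>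
      proof -
        assume tau: "\<tau> \<in> {t..t+h}"
        have "norm (r \<tau> - r t) \<le> B * (\<tau> - t)" using lip[of t \<tau>] tau T t by auto
        also have "\<dots> \<le> B * h" using tau Bpos by (auto intro: mult_left_mono)
        also have "\<dots> = e / 2" using Bpos by (simp add: h_def)
        finally have "dist (r t) (r \<tau>) \<le> e/2" by (simp add: dist_norm norm_minus_commute)
        then have "infdist (r \<tau>) \<Omega> \<ge> e/2"
          using infdist_triangle[of "r t" \<Omega> "r \<tau>"] t by linarith
        then have "r \<tau> \<in> K" using inK[of \<tau>] tau T t by (auto simp: K_def)
        then show "g (r \<tau>) \<ge> m" using x0min by (simp add: m_def)
      qed
      then have "V (t+h) + 2 * c * m * ((t+h) - t) \<le> V t"
        using key[of t "t+h" m] T t hpos by auto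
      then have "V (t+h) + \<delta> \<le> V T" using Vmono[of T t] T t by (simp add: \<delta>_def)
      then have "V (t+h) < L" using T by linarith
      moreover have "L \<le> V (t+h)" using Lle T t hpos by auto
      ultimately show False by simp
    qed
  qed
qed

end
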